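(* Consider Algorithm 3 (described in the context) under the Standing Assumption, Matrix Assumption and Gradient Assumption of the context. For all $k\in\mathbb{N}$, $$g_k^Td_k\ge\mathbb{E}_k[\bar g_k^T\bar d_k]\ge g_k^Td_k-\zeta^{-1}M\qquad\text{and}\qquad d_k^TH_kd_k\le\mathbb{E}_k[\bar d_k^TH_k\bar d_k].$$
   Context: Problem: $\min_x f(x)$ s.t. $c(x)=0$, $f(x)=\mathbb{E}[F(x,\omega)]$, $c:\mathbb{R}^n\to\mathbb{R}^m$ deterministic. Notation: $g_k=\nabla f(x_k)$, $c_k=c(x_k)$, $J_k=\nabla c(x_k)^T$; $\Delta q(x,\tau,g,H,d)=-\tau(g^Td+\frac12\max\{d^THd,0\})+\|c(x)\|_1$. Standing Assumption: an open convex set $\mathcal X$ contains all iterates; $f$ is $C^1$, bounded below on $\mathcal X$, $\nabla f$ bounded and $L$-Lipschitz on $\mathcal X$; $c$, $\nabla c^T$ bounded on $\mathcal X$; $\nabla c_i$ is $\gamma_i$-Lipschitz on $\mathcal X$; singular values of $\nabla c(x)^T$ bounded away from zero uniformly over $\mathcal X$; $\Gamma:=\sum_i\gamma_i$. Matrix Assumption: deterministic symmetric $H_k$, chosen independently of the stochastic gradients, with $\|H_k\|_2\le\kappa_H$ and $u^TH_ku\ge\zeta\|u\|_2^2$ whenever $J_ku=0$. Algorithm 3 (inputs $x_0$, $\bar\tau_{-1}>0$, $\epsilon,\sigma\in(0,1)$, $\bar\xi_{-1}>0$, $\{\beta_k\}\subset(0,1]$, $\theta\ge0$): at iteration $k$,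 obtain stochastic gradient $\bar g_k$; $(\bar d_k,\bar y_k)$ solves $H_k\bar d_k+J_k^T\bar y_k=-\bar g_k$, $J_k\bar d_k=-c_k$ (assumed $\bar d_k\neq0$). $\bar\tau_k^{trial}=\infty$ if $\bar g_k^T\bar d_k+\max\{\bar d_k^TH_k\bar d_k,0\}\le0$, else $\frac{(1-\sigma)\|c_k\|_1}{\bar g_k^T\bar d_k+\max\{\bar d_k^TH_k\bar d_k,0\}}$; $\bar\tau_k=\bar\tau_{k-1}$ if $\bar\tau_{k-1}\le\bar\tau_k^{trial}$, else $(1-\epsilon)\bar\tau_k^{trial}$. $\bar\xi_k^{trial}=\frac{\Delta q(x_k,\bar\tau_k,\bar g_k,H_k,\bar d_k)}{\bar\tau_k\|\bar d_k\|_2^2}$; $\bar\xi_k=\bar\xi_{k-1}$ if $\bar\xi_{k-1}\le\bar\xi_k^{trial}$, else $(1-\epsilon)\bar\xi_k^{trial}$. With $D_k=(\bar\tau_kL+\Gamma)\|\bar d_k\|_2^2$, $\hat a_k=\beta_k\Delta q(x_k,\bar\tau_k,\bar g_k,H_k,\bar d_k)/D_k$, $\tilde a_k=\hat a_k-4\|c_k\|_1/D_k$, project both onto $[a_k,a_k+\theta\beta_k^2]$ with $a_k=\frac{\beta_k\bar\xi_k\bar\tau_k}{\bar\tau_kL+\Gamma}$ to get $\widehat\alpha_k,\widetilde\alpha_k$; $\bar\alpha_k=\widehat\alpha_k$ if $\widehat\alpha_k<1$, $1$ if $\widetilde\alpha_k\le1\le\widehat\alpha_k$, $\widetilde\alpha_k$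 if $\widetilde\alpha_k>1$; $x_{k+1}=x_k+\bar\alpha_k\bar d_k$. Gradient Assumption: $\mathbb{E}_k[\bar g_k]=g_k$ and $\mathbb{E}_k[\|\bar g_k-g_k\|_2^2]\le M$, where $\mathbb{E}_k$ is expectation w.r.t. $\omega$ conditioned on the algorithm having reached $x_k$ at iteration $k$. Deterministic counterpart: $(d_k,y_k)$ solves $H_kd_k+J_k^Ty_k=-g_k$, $J_kd_k=-c_k$. *)

theory Defs
  imports "HOL-Probability.Probability"
begin

text \<open>Standing Assumption on the open convex set X containing all iterates.
  f : real^'n -> real with gradient gradf, c : real^'n -> real^'m with Jacobian Jc
  (so Jc x = nabla c(x)^T, an m x n matrix whose i-th row is nabla c_i(x)^T).\<close>
definition standing_assumption ::
  "(real^'n) set \<Rightarrow> (real^'n \<Rightarrow> real) \<Rightarrow> (real^'n \<Rightarrow> real^'n) \<Rightarrow>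
   (real^'n \<Rightarrow> real^'m) \<Rightarrow> (real^'n \<Rightarrow> real^'n^'m) \<Rightarrow> real \<Rightarrow> ('m \<Rightarrow> real) \<Rightarrow> bool" where
  "standing_assumption X f gradf c Jc L \<gamma> \<longleftrightarrow>
     open X \<and> convex X \<and>
     (\<forall>x\<in>X. (f has_derivative (\<lambda>h. gradf x \<bullet> h)) (at x)) \<and>
     continuous_on X gradf \<and>
     bdd_below (f ` X) \<and> bounded (gradf ` X) \<and>
     (\<forall>x\<in>X. \<forall>y\<in>X. norm (gradf x - gradf y) \<le> L * norm (x - y)) \<and>
     (\<forall>x\<in>X. (c has_derivative (\<lambda>h. Jc x *v h)) (at x)) \<and>
     bounded (c ` X) \<and> bounded (Jc ` X) \<and>
     (\<forall>i. \<forall>x\<in>X. \<forall>y\<in>X. norm (row i (Jc x) - row i (Jc y)) \<le> \<gamma> i * norm (x - y)) \<and>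
     (\<exists>\<sigma>>0. \<forall>x\<in>X. \<forall>v. \<sigma> * norm v \<le> norm (transpose (Jc x) *v v))"

definition matrix_assumption ::
  "real^'n^'n \<Rightarrow> real^'n^'m \<Rightarrow> real \<Rightarrow> real \<Rightarrow> bool" where
  "matrix_assumption H J \<kappa>H \<zeta> \<longleftrightarrow>
     transpose H = H \<and> onorm (\<lambda>u. H *v u) \<le> \<kappa>H \<and>
     (\<forall>u. J *v u = 0 \<longrightarrow> \<zeta> * (norm u)\<^sup>2 \<le> u \<bullet> (H *v u))"

text \<open>Gradient Assumption: under the (conditional) probability law P of omega at
  iteration k, the stochastic gradient gbar is unbiased for g with variance at most M.\<close>
definition gradient_assumption ::
  "'w measure \<Rightarrow> ('w \<Rightarrow> real^'n) \<Rightarrow> real^'n \<Rightarrow> real \<Rightarrow> bool" where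
  "gradient_assumption P gbar g M \<longleftrightarrow>
     prob_space P \<and> gbar \<in> borel_measurable P \<and>
     integrable P gbar \<and> integral\<^sup>L P gbar = g \<and>
     integrable P (\<lambda>\<omega>. (norm (gbar \<omega> - g))\<^sup>2) \<and>
     integral\<^sup>L P (\<lambda>\<omega>. (norm (gbar \<omega> - g))\<^sup>2) \<le> M"

end

theory Submission
  imports Defs
begin

lemma key_pointwise:
  fixes H :: "real^'n^'n" and J :: "real^'n^'m"
  assumes Z: "\<forall>u. J *v u = 0 \<longrightarrow> \<zeta>*(norm u)^2 \<le> u \<bullet> (H *v u)" and zp: "0<\<zeta>"
    and E: "H *v v + transpose J *v w = -e" and V: "J *v v = 0"
  shows "v \<bullet> (H *v v) = -(e \<bullet> v)" "-(e \<bullet> v) \<le> (norm e)^2/\<zeta>" "e \<bullet> v \<le> 0"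
    "norm v \<le> norm e / \<zeta>"
proof -
  have Hv: "H *v v = -e - transpose J *v w" using E by (simp add: algebra_simps eq_neg_iff_add_eq_0)
  have "(transpose J *v w) \<bullet> v = (w v* J) \<bullet> v"
    by (metis transpose_transpose vector_transpose_matrix)
  also have "\<dots> = 0" by (simp add: dot_lmul_matrix V)
  finally have t0: "(transpose J *v w) \<bullet> v = 0" .
  show 1: "v \<bullet> (H *v v) = -(e \<bullet> v)" using t0 by (simp add: Hv inner_diff_right inner_commute)
  have q: "\<zeta>*(norm v)^2 \<le> -(e \<bullet> v)" using Z V 1 by auto
  then show "e \<bullet> v \<le> 0" using zp by (smt (verit) mult_nonneg_nonneg zero_le_power2)
  have cs: "-(e \<bullet> v) \<le> norm e * norm v"
    by (metis Cauchy_Schwarz_ineq2 abs_le_iff)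
  have nv: "norm v \<le> norm e / \<zeta>"
  proof (cases "norm v = 0")
    case True then show ?thesis using zp by simp
  next
    case False
    have "(\<zeta> * norm v) * norm v \<le> norm e * norm v" using q cs by (simp add: power2_eq_square mult.assoc)
    moreover have "norm v > 0" using False by simp
    ultimately have "\<zeta> * norm v \<le> norm e" by (simp add: mult_le_cancel_right)
    then show ?thesis using zp by (simp add: field_simps)
  qed
  show "norm v \<le> norm e / \<zeta>" by (fact nv)
  have "norm e * norm v \<le> norm e * (norm e / \<zeta>)" by (rule mult_left_mono[OF nv]) simp
  then show "-(e \<bullet> v) \<le> (norm e)^2/\<zeta>" using cs by (simp add: power2_eq_square)
qed

lemma sym_inner:
  fixes H :: "real^'n^'n"
  assumes "transpose H = H"
  shows "a \<bullet> (H *v b) = (H *v a) \<bullet> b"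
  by (metis assms dot_lmul_matrix vector_transpose_matrix)

definition KK :: "real^'n^'n \<Rightarrow> real^'n^'m \<Rightarrow> ((real^'n) \<times> (real^'m)) \<Rightarrow> ((real^'n) \<times> (real^'m))" where
  "KK H J p = (H *v fst p + transpose J *v snd p, J *v fst p)"

lemma K_linear: "linear (KK H J)"
  by (auto simp: linear_iff KK_def matrix_vector_right_distrib algebra_simps)

theorem lemma3p8:
  fixes X :: "(real^'n) set" and f :: "real^'n \<Rightarrow> real" and gradf :: "real^'n \<Rightarrow> real^'n"
    and c :: "real^'n \<Rightarrow> real^'m" and Jc :: "real^'n \<Rightarrow> real^'n^'m"
    and L :: real and \<gamma> :: "'m \<Rightarrow> real" and \<kappa>H \<zeta> M :: real
    and x :: "nat \<Rightarrow> real^'n" and H :: "nat \<Rightarrow> real^'n^'n"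
    and P :: "nat \<Rightarrow> 'w measure" and gbar :: "nat \<Rightarrow> 'w \<Rightarrow> real^'n"
    and dbar :: "nat \<Rightarrow> 'w \<Rightarrow> real^'n" and ybar :: "nat \<Rightarrow> 'w \<Rightarrow> real^'m"
    and d :: "nat \<Rightarrow> real^'n" and y :: "nat \<Rightarrow> real^'m"
    and k :: nat
  assumes SA: "standing_assumption X f gradf c Jc L \<gamma>"
    and iter_in: "\<forall>j. x j \<in> X"
    and zeta_pos: "0 < \<zeta>"
    and MA: "\<forall>j. matrix_assumption (H j) (Jc (x j)) \<kappa>H \<zeta>"
    and GA: "\<forall>j. gradient_assumption (P j) (gbar j) (gradf (x j)) M"
    and stoch_sys: "\<forall>j. \<forall>\<omega>\<in>space (P j).
           H j *v dbar j \<omega> + transpose (Jc (x j)) *v ybar j \<omega> = - gbar j \<omega>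
         \<and> Jc (x j) *v dbar j \<omega> = - c (x j)"
    and det_sys: "\<forall>j. H j *v d j + transpose (Jc (x j)) *v y j = - gradf (x j)
         \<and> Jc (x j) *v d j = - c (x j)"
  shows "gradf (x k) \<bullet> d k \<ge> integral\<^sup>L (P k) (\<lambda>\<omega>. gbar k \<omega> \<bullet> dbar k \<omega>)
       \<and> integral\<^sup>L (P k) (\<lambda>\<omega>. gbar k \<omega> \<bullet> dbar k \<omega>) \<ge> gradf (x k) \<bullet> d k - M / \<zeta>
       \<and> d k \<bullet> (H k *v d k) \<le> integral\<^sup>L (P k) (\<lambda>\<omega>. dbar k \<omega> \<bullet> (H k *v dbar k \<omega>))"
proof -
  define J where "J = Jc (x k)"
  define Hk where "Hk = H k"
  define g0 where "g0 = gradf (x k)"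
  define Pk where "Pk = P k"
  have MAk: "transpose Hk = Hk" "\<forall>u. J *v u = 0 \<longrightarrow> \<zeta> * (norm u)\<^sup>2 \<le> u \<bullet> (Hk *v u)"
    using MA unfolding matrix_assumption_def J_def Hk_def by auto
  have ps: "prob_space Pk" and gI: "integrable Pk (gbar k)" and gE: "integral\<^sup>L Pk (gbar k) = g0"
    and sqI: "integrable Pk (\<lambda>\<omega>. (norm (gbar k \<omega> - g0))\<^sup>2)"
    and sqE: "integral\<^sup>L Pk (\<lambda>\<omega>. (norm (gbar k \<omega> - g0))\<^sup>2) \<le> M"
    using GA unfolding gradient_assumption_def Pk_def g0_def by auto
  obtain \<sigma> where sp: "\<sigma> > 0" and sJ: "\<forall>v. \<sigma> * norm v \<le> norm (transpose J *v v)"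
    using SA iter_in unfolding standing_assumption_def J_def by blast
  have injK: "inj (KK Hk J)"
    unfolding linear_injective_0[OF K_linear]
  proof (intro allI impI)
    fix p :: "(real^'n) \<times> (real^'m)"
    assume "KK Hk J p = 0"
    then have a: "Hk *v fst p + transpose J *v snd p = - 0" and b: "J *v fst p = 0"
      by (auto simp: KK_def prod_eq_iff)
    have "\<zeta> * (norm (fst p))\<^sup>2 \<le> 0" using key_pointwise(1)[OF MAk(2) zeta_pos a b] MAk(2) b by auto
    then have f0: "fst p = 0" using zeta_pos
      by (smt (verit) mult_pos_pos norm_eq_zero zero_less_power2 norm_ge_zero)
    then have "transpose J *v snd p = 0" using a by simp
    then have "snd p = 0" using sJ sp
      by (metis mult_le_0_iff norm_eq_zero norm_ge_zero norm_zero order_antisym_conv not_le)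
    then show "p = 0" using f0 by (simp add: prod_eq_iff)
  qed
  obtain G where Glin: "linear G" and GK: "G \<circ> KK Hk J = id"
    using linear_injective_left_inverse[OF K_linear injK] by blast
  define T where "T z = fst (G (- z, 0 :: real^'m))" for z :: "real^'n"
  have Tbl: "bounded_linear T"
  proof -
    have "bounded_linear G" using Glin linear_conv_bounded_linear by blast
    moreover have "bounded_linear (\<lambda>z::real^'n. (- z, 0 :: real^'m))"
      by (intro bounded_linear_Pair bounded_linear_minus bounded_linear_ident bounded_linear_zero)
    ultimately have "bounded_linear (\<lambda>z. G (- z, 0 :: real^'m))"
      using bounded_linear_compose by blast
    then show ?thesis unfolding T_def using bounded_linear_compose[OF bounded_linear_fst] by blast
  qed
  define e where "e \<omega> = gbar k \<omega> - g0" for \<omega>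
  define v where "v \<omega> = T (e \<omega>)" for \<omega>
  have pw: "dbar k \<omega> = d k + v \<omega>" "Jc (x k) *v v \<omega> = 0"
     "Hk *v v \<omega> + transpose J *v (ybar k \<omega> - y k) = - e \<omega>"
    if "\<omega> \<in> space Pk" for \<omega>
  proof -
    have s1: "H k *v dbar k \<omega> + transpose (Jc (x k)) *v ybar k \<omega> = - gbar k \<omega>"
      "Jc (x k) *v dbar k \<omega> = - c (x k)" using stoch_sys that unfolding Pk_def by auto
    have s2: "H k *v d k + transpose (Jc (x k)) *v y k = - gradf (x k)"
      "Jc (x k) *v d k = - c (x k)" using det_sys by auto
    have kk: "KK Hk J (dbar k \<omega> - d k, ybar k \<omega> - y k) = (- e \<omega>, 0)"
      using s1 s2 unfolding KK_def e_def J_def Hk_def g0_def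
      by (simp add: matrix_vector_mult_diff_distrib algebra_simps)
    then have "G (- e \<omega>, 0) = (dbar k \<omega> - d k, ybar k \<omega> - y k)"
      using GK by (metis comp_apply id_apply)
    then have dv: "dbar k \<omega> = d k + v \<omega>" unfolding v_def T_def by simp
    show "dbar k \<omega> = d k + v \<omega>" by (fact dv)
    show "Jc (x k) *v v \<omega> = 0" using s1 s2 dv by (simp add: matrix_vector_right_distrib)
    show "Hk *v v \<omega> + transpose J *v (ybar k \<omega> - y k) = - e \<omega>"
      using kk dv unfolding KK_def by simp
  qed
  have kp: "v \<omega> \<bullet> (Hk *v v \<omega>) = -(e \<omega> \<bullet> v \<omega>)" "-(e \<omega> \<bullet> v \<omega>) \<le> (norm (e \<omega>))^2/\<zeta>"
     "e \<omega> \<bullet> v \<omega> \<le> 0" if "\<omega> \<in> space Pk" for \<omega>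
    using key_pointwise[OF MAk(2) zeta_pos pw(3)[OF that]] pw(2)[OF that] unfolding J_def by auto
  interpret prob_space Pk by (fact ps)
  have eI: "integrable Pk e" unfolding e_def using gI by auto
  have eE: "integral\<^sup>L Pk e = 0" unfolding e_def using gI gE by (simp add: prob_space)
  have vI: "integrable Pk v" unfolding v_def by (rule integrable_bounded_linear[OF Tbl eI])
  have vE: "integral\<^sup>L Pk v = 0" unfolding v_def
    using integral_bounded_linear[OF Tbl eI] eE Tbl linear_simps(3) bounded_linear.linear by fastforce
  have lin_v: "integrable Pk (\<lambda>\<omega>. a \<bullet> v \<omega>) \<and> integral\<^sup>L Pk (\<lambda>\<omega>. a \<bullet> v \<omega>) = 0" for a
    using integral_bounded_linear[OF bounded_linear_inner_right vI]
      integrable_bounded_linear[OF bounded_linear_inner_right vI] vE by simp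
  have lin_e: "integrable Pk (\<lambda>\<omega>. e \<omega> \<bullet> a) \<and> integral\<^sup>L Pk (\<lambda>\<omega>. e \<omega> \<bullet> a) = 0" for a
    using integral_bounded_linear[OF bounded_linear_inner_left eI]
      integrable_bounded_linear[OF bounded_linear_inner_left eI] eE by simp
  have sqI': "integrable Pk (\<lambda>\<omega>. (norm (e \<omega>))\<^sup>2 / \<zeta>)" using sqI unfolding e_def by auto
  have evI: "integrable Pk (\<lambda>\<omega>. e \<omega> \<bullet> v \<omega>)"
  proof (rule Bochner_Integration.integrable_bound[OF sqI'])
    show "(\<lambda>\<omega>. e \<omega> \<bullet> v \<omega>) \<in> borel_measurable Pk"
      using eI vI by (intro borel_measurable_inner) auto
    show "AE \<omega> in Pk. norm (e \<omega> \<bullet> v \<omega>) \<le> norm ((norm (e \<omega>))\<^sup>2 / \<zeta>)"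
    proof (intro AE_I2)
      fix \<omega> assume w: "\<omega> \<in> space Pk"
      have "norm (e \<omega> \<bullet> v \<omega>) = - (e \<omega> \<bullet> v \<omega>)" using kp(3)[OF w] by simp
      also have "\<dots> \<le> (norm (e \<omega>))\<^sup>2 / \<zeta>" by (rule kp(2)[OF w])
      also have "\<dots> \<le> norm ((norm (e \<omega>))\<^sup>2 / \<zeta>)" using zeta_pos by simp
      finally show "norm (e \<omega> \<bullet> v \<omega>) \<le> norm ((norm (e \<omega>))\<^sup>2 / \<zeta>)" .
    qed
  qed
  have evE1: "integral\<^sup>L Pk (\<lambda>\<omega>. e \<omega> \<bullet> v \<omega>) \<le> 0"
  proof -
    have "0 \<le> integral\<^sup>L Pk (\<lambda>\<omega>. - (e \<omega> \<bullet> v \<omega>))"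
      using kp by (intro integral_nonneg_AE AE_I2) auto
    then show ?thesis by simp
  qed
  have "integral\<^sup>L Pk (\<lambda>\<omega>. - ((norm (e \<omega>))\<^sup>2 / \<zeta>)) \<le> integral\<^sup>L Pk (\<lambda>\<omega>. e \<omega> \<bullet> v \<omega>)"
    using kp(2) sqI' evI by (intro integral_mono_AE AE_I2) (auto, smt (verit) kp(2))
  moreover have "integral\<^sup>L Pk (\<lambda>\<omega>. - ((norm (e \<omega>))\<^sup>2 / \<zeta>)) \<ge> - M / \<zeta>"
    using sqE zeta_pos unfolding e_def by (simp add: divide_right_mono)
  ultimately have evE2: "integral\<^sup>L Pk (\<lambda>\<omega>. e \<omega> \<bullet> v \<omega>) \<ge> - M / \<zeta>" by linarith
  have A: "integral\<^sup>L Pk (\<lambda>\<omega>. gbar k \<omega> \<bullet> dbar k \<omega>) = g0 \<bullet> d k + integral\<^sup>L Pk (\<lambda>\<omega>. e \<omega> \<bullet> v \<omega>)"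
  proof -
    have "integral\<^sup>L Pk (\<lambda>\<omega>. gbar k \<omega> \<bullet> dbar k \<omega>) =
       integral\<^sup>L Pk (\<lambda>\<omega>. g0 \<bullet> d k + ((g0 \<bullet> v \<omega> + e \<omega> \<bullet> d k) + e \<omega> \<bullet> v \<omega>))"
      using pw(1) by (intro Bochner_Integration.integral_cong[OF refl]) (auto simp: e_def inner_add_left inner_add_right inner_diff_left)
    also have "\<dots> = g0 \<bullet> d k + ((integral\<^sup>L Pk (\<lambda>\<omega>. g0 \<bullet> v \<omega>) + integral\<^sup>L Pk (\<lambda>\<omega>. e \<omega> \<bullet> d k))
        + integral\<^sup>L Pk (\<lambda>\<omega>. e \<omega> \<bullet> v \<omega>))"
      using lin_v lin_e evI by (simp add: prob_space)
    finally show ?thesis using lin_v lin_e by simp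
  qed
  have B: "integral\<^sup>L Pk (\<lambda>\<omega>. dbar k \<omega> \<bullet> (Hk *v dbar k \<omega>)) = d k \<bullet> (Hk *v d k) - integral\<^sup>L Pk (\<lambda>\<omega>. e \<omega> \<bullet> v \<omega>)"
  proof -
    have "integral\<^sup>L Pk (\<lambda>\<omega>. dbar k \<omega> \<bullet> (Hk *v dbar k \<omega>)) =
       integral\<^sup>L Pk (\<lambda>\<omega>. d k \<bullet> (Hk *v d k) + (2 * ((Hk *v d k) \<bullet> v \<omega>) - e \<omega> \<bullet> v \<omega>))"
    proof (rule Bochner_Integration.integral_cong[OF refl])
      fix \<omega> assume w: "\<omega> \<in> space Pk"
      have "dbar k \<omega> \<bullet> (Hk *v dbar k \<omega>) = d k \<bullet> (Hk *v d k) + d k \<bullet> (Hk *v v \<omega>) + v \<omega> \<bullet> (Hk *v d k) + v \<omega> \<bullet> (Hk *v v \<omega>)"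
        using pw(1)[OF w] by (simp add: matrix_vector_right_distrib inner_add_left inner_add_right)
      also have "\<dots> = d k \<bullet> (Hk *v d k) + (2 * ((Hk *v d k) \<bullet> v \<omega>) - e \<omega> \<bullet> v \<omega>)"
        using kp(1)[OF w] sym_inner[OF MAk(1), of "d k" "v \<omega>"] by (simp add: inner_commute)
      finally show "dbar k \<omega> \<bullet> (Hk *v dbar k \<omega>) = d k \<bullet> (Hk *v d k) + (2 * ((Hk *v d k) \<bullet> v \<omega>) - e \<omega> \<bullet> v \<omega>)" .
    qed
    also have "\<dots> = d k \<bullet> (Hk *v d k) + (2 * integral\<^sup>L Pk (\<lambda>\<omega>. (Hk *v d k) \<bullet> v \<omega>) - integral\<^sup>L Pk (\<lambda>\<omega>. e \<omega> \<bullet> v \<omega>))"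
      using lin_v evI by (simp add: prob_space)
    finally show ?thesis using lin_v by simp
  qed
  show ?thesis using A B evE1 evE2 unfolding g0_def Pk_def Hk_def by simp
qed

end
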